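(* Let $p\ge 3$ be a prime and let $w$ be a zero-sum-free $\mathbb{Z}_p$-arc-labelling of $\overleftrightarrow{K}_3$. Then there exist a vertex $v\in V(\overleftrightarrow{K}_3)$ and directed paths $P_1,P_2$ of positive length in $\overleftrightarrow{K}_3$, both ending at $v$, such that the three values $0$, $\sum_{(x,y)\in A(P_1)} w(x,y)$ and $\sum_{(x,y)\in A(P_2)} w(x,y)$ are pairwise distinct.
   Context: $\overleftrightarrow{K}_3$ denotes the complete digraph on $3$ vertices whose arc set consists of all ordered pairs of distinct vertices; $A(P)$ denotes the arc set of a path $P$. A $\mathbb{Z}_p$-arc-labelling is a function from the arc set to the cyclic group $\mathbb{Z}_p$; it is zero-sum-free if no directed cycle (including directed cycles of length two) has arc-labels summing to $0$ in $\mathbb{Z}_p$. *)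

theory Defs
  imports "HOL-Number_Theory.Number_Theory"
begin

text \<open>The complete digraph on the vertex set V: every ordered pair of distinct
 vertices of V is an arc. Here K3 has vertex set {0,1,2}.\<close>

definition K3_vertices :: "nat set" where
  "K3_vertices = {0, 1, 2}"

text \<open>A directed path of positive length: a list of pairwise distinct vertices
 with at least two entries (hence at least one arc); in a complete digraph every
 consecutive pair is an arc.\<close>

definition dpath :: "'a set \<Rightarrow> 'a list \<Rightarrow> bool" where
  "dpath V xs \<longleftrightarrow> distinct xs \<and> 2 \<le> length xs \<and> set xs \<subseteq> V"

definition path_arcs :: "'a list \<Rightarrow> ('a \<times> 'a) set" where
  "path_arcs xs = set (zip xs (tl xs))"

definition dcycle :: "'a set \<Rightarrow> 'a list \<Rightarrow> bool" where
  "dcycle V xs \<longleftrightarrow> distinct xs \<and> 2 \<le> length xs \<and> set xs \<subseteq> V"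

definition cycle_arcs :: "'a list \<Rightarrow> ('a \<times> 'a) list" where
  "cycle_arcs xs = zip xs (tl xs @ [hd xs])"

text \<open>Z_p-labels are represented by integers, compared modulo p.\<close>

definition zero_sum_free :: "nat \<Rightarrow> 'a set \<Rightarrow> ('a \<times> 'a \<Rightarrow> int) \<Rightarrow> bool" where
  "zero_sum_free p V w \<longleftrightarrow>
     (\<forall>xs. dcycle V xs \<longrightarrow> \<not> [sum_list (map w (cycle_arcs xs)) = 0] (mod int p))"

end

theory Submission
  imports Defs
begin

lemma modz:
  fixes z p :: int assumes "p > 0" "-3*p < z" "z < 3*p"
  shows "z mod p = 0 \<longleftrightarrow> z = -2*p \<or> z = -p \<or> z = 0 \<or> z = p \<or> z = 2*p"
proof
  assume h: "z mod p = 0"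
  then obtain k where e: "z = p * k" by (metis dvd_def mod_0_imp_dvd)
  have "k > -3"
  proof (rule ccontr)
    assume "\<not> k > -3" then have "p * k \<le> p * (-3)" using assms(1) by (intro mult_left_mono) auto
    then show False using e assms by linarith
  qed
  moreover have "k < 3"
  proof (rule ccontr)
    assume "\<not> k < 3" then have "p * k \<ge> p * 3" using assms(1) by (intro mult_left_mono) auto
    then show False using e assms by linarith
  qed
  ultimately have "k = -2 \<or> k = -1 \<or> k = 0 \<or> k = 1 \<or> k = 2" by linarith
  then show "z = -2*p \<or> z = -p \<or> z = 0 \<or> z = p \<or> z = 2*p" using e by auto
next
  assume "z = -2*p \<or> z = -p \<or> z = 0 \<or> z = p \<or> z = 2*p"
  then show "z mod p = 0" by auto
qed

definition Zp :: "int \<Rightarrow> int \<Rightarrow> bool" where "Zp p z \<longleftrightarrow> z mod p = 0"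

lemma key_lin:
  fixes p m a01 a02 a10 a12 a20 a21 :: int
  assumes p: "p \<ge> 3" "p = 2*m+1"
    and b: "0 \<le> a01" "a01 < p" "0 \<le> a02" "a02 < p" "0 \<le> a10" "a10 < p"
       "0 \<le> a12" "a12 < p" "0 \<le> a20" "a20 < p" "0 \<le> a21" "a21 < p"
    and h: "\<not> ((a01+a10) = -2*p \<or> (a01+a10) = -p \<or> (a01+a10) = 0 \<or> (a01+a10) = p \<or> (a01+a10) = 2*p)" "\<not> ((a02+a20) = -2*p \<or> (a02+a20) = -p \<or> (a02+a20) = 0 \<or> (a02+a20) = p \<or> (a02+a20) = 2*p)" "\<not> ((a12+a21) = -2*p \<or> (a12+a21) = -p \<or> (a12+a21) = 0 \<or> (a12+a21) = p \<or> (a12+a21) = 2*p)" "\<not> ((a01+a12+a20) = -2*p \<or> (a01+a12+a20) = -p \<or> (a01+a12+a20) = 0 \<or> (a01+a12+a20) = p \<or> (a01+a12+a20) = 2*p)" "\<not> ((a02+a21+a10) = -2*p \<or> (a02+a21+a10) = -p \<or> (a02+a21+a10) = 0 \<or> (a02+a21+a10) = p \<or> (a02+a21+a10) = 2*p)"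
  shows "(\<not> ((a02) = -2*p \<or> (a02) = -p \<or> (a02) = 0 \<or> (a02) = p \<or> (a02) = 2*p) \<and> \<not> ((a12) = -2*p \<or> (a12) = -p \<or> (a12) = 0 \<or> (a12) = p \<or> (a12) = 2*p) \<and> \<not> (((a02) - (a12)) = -2*p \<or> ((a02) - (a12)) = -p \<or> ((a02) - (a12)) = 0 \<or> ((a02) - (a12)) = p \<or> ((a02) - (a12)) = 2*p)) \<or>
     (\<not> ((a02) = -2*p \<or> (a02) = -p \<or> (a02) = 0 \<or> (a02) = p \<or> (a02) = 2*p) \<and> \<not> ((a10+a02) = -2*p \<or> (a10+a02) = -p \<or> (a10+a02) = 0 \<or> (a10+a02) = p \<or> (a10+a02) = 2*p) \<and> \<not> (((a02) - (a10+a02)) = -2*p \<or> ((a02) - (a10+a02)) = -p \<or> ((a02) - (a10+a02)) = 0 \<or> ((a02) - (a10+a02)) = p \<or> ((a02) - (a10+a02)) = 2*p)) \<or>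
     (\<not> ((a02) = -2*p \<or> (a02) = -p \<or> (a02) = 0 \<or> (a02) = p \<or> (a02) = 2*p) \<and> \<not> ((a01+a12) = -2*p \<or> (a01+a12) = -p \<or> (a01+a12) = 0 \<or> (a01+a12) = p \<or> (a01+a12) = 2*p) \<and> \<not> (((a02) - (a01+a12)) = -2*p \<or> ((a02) - (a01+a12)) = -p \<or> ((a02) - (a01+a12)) = 0 \<or> ((a02) - (a01+a12)) = p \<or> ((a02) - (a01+a12)) = 2*p)) \<or>
     (\<not> ((a12) = -2*p \<or> (a12) = -p \<or> (a12) = 0 \<or> (a12) = p \<or> (a12) = 2*p) \<and> \<not> ((a10+a02) = -2*p \<or> (a10+a02) = -p \<or> (a10+a02) = 0 \<or> (a10+a02) = p \<or> (a10+a02) = 2*p) \<and> \<not> (((a12) - (a10+a02)) = -2*p \<or> ((a12) - (a10+a02)) = -p \<or> ((a12) - (a10+a02)) = 0 \<or> ((a12) - (a10+a02)) = p \<or> ((a12) - (a10+a02)) = 2*p)) \<or>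
     (\<not> ((a12) = -2*p \<or> (a12) = -p \<or> (a12) = 0 \<or> (a12) = p \<or> (a12) = 2*p) \<and> \<not> ((a01+a12) = -2*p \<or> (a01+a12) = -p \<or> (a01+a12) = 0 \<or> (a01+a12) = p \<or> (a01+a12) = 2*p) \<and> \<not> (((a12) - (a01+a12)) = -2*p \<or> ((a12) - (a01+a12)) = -p \<or> ((a12) - (a01+a12)) = 0 \<or> ((a12) - (a01+a12)) = p \<or> ((a12) - (a01+a12)) = 2*p)) \<or>
     (\<not> ((a10+a02) = -2*p \<or> (a10+a02) = -p \<or> (a10+a02) = 0 \<or> (a10+a02) = p \<or> (a10+a02) = 2*p) \<and> \<not> ((a01+a12) = -2*p \<or> (a01+a12) = -p \<or> (a01+a12) = 0 \<or> (a01+a12) = p \<or> (a01+a12) = 2*p) \<and> \<not> (((a10+a02) - (a01+a12)) = -2*p \<or> ((a10+a02) - (a01+a12)) = -p \<or> ((a10+a02) - (a01+a12)) = 0 \<or> ((a10+a02) - (a01+a12)) = p \<or> ((a10+a02) - (a01+a12)) = 2*p)) \<or>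
     (\<not> ((a01) = -2*p \<or> (a01) = -p \<or> (a01) = 0 \<or> (a01) = p \<or> (a01) = 2*p) \<and> \<not> ((a21) = -2*p \<or> (a21) = -p \<or> (a21) = 0 \<or> (a21) = p \<or> (a21) = 2*p) \<and> \<not> (((a01) - (a21)) = -2*p \<or> ((a01) - (a21)) = -p \<or> ((a01) - (a21)) = 0 \<or> ((a01) - (a21)) = p \<or> ((a01) - (a21)) = 2*p)) \<or>
     (\<not> ((a01) = -2*p \<or> (a01) = -p \<or> (a01) = 0 \<or> (a01) = p \<or> (a01) = 2*p) \<and> \<not> ((a20+a01) = -2*p \<or> (a20+a01) = -p \<or> (a20+a01) = 0 \<or> (a20+a01) = p \<or> (a20+a01) = 2*p) \<and> \<not> (((a01) - (a20+a01)) = -2*p \<or> ((a01) - (a20+a01)) = -p \<or> ((a01) - (a20+a01)) = 0 \<or> ((a01) - (a20+a01)) = p \<or> ((a01) - (a20+a01)) = 2*p)) \<or>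
     (\<not> ((a01) = -2*p \<or> (a01) = -p \<or> (a01) = 0 \<or> (a01) = p \<or> (a01) = 2*p) \<and> \<not> ((a02+a21) = -2*p \<or> (a02+a21) = -p \<or> (a02+a21) = 0 \<or> (a02+a21) = p \<or> (a02+a21) = 2*p) \<and> \<not> (((a01) - (a02+a21)) = -2*p \<or> ((a01) - (a02+a21)) = -p \<or> ((a01) - (a02+a21)) = 0 \<or> ((a01) - (a02+a21)) = p \<or> ((a01) - (a02+a21)) = 2*p)) \<or>
     (\<not> ((a21) = -2*p \<or> (a21) = -p \<or> (a21) = 0 \<or> (a21) = p \<or> (a21) = 2*p) \<and> \<not> ((a20+a01) = -2*p \<or> (a20+a01) = -p \<or> (a20+a01) = 0 \<or> (a20+a01) = p \<or> (a20+a01) = 2*p) \<and> \<not> (((a21) - (a20+a01)) = -2*p \<or> ((a21) - (a20+a01)) = -p \<or> ((a21) - (a20+a01)) = 0 \<or> ((a21) - (a20+a01)) = p \<or> ((a21) - (a20+a01)) = 2*p)) \<or>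
     (\<not> ((a21) = -2*p \<or> (a21) = -p \<or> (a21) = 0 \<or> (a21) = p \<or> (a21) = 2*p) \<and> \<not> ((a02+a21) = -2*p \<or> (a02+a21) = -p \<or> (a02+a21) = 0 \<or> (a02+a21) = p \<or> (a02+a21) = 2*p) \<and> \<not> (((a21) - (a02+a21)) = -2*p \<or> ((a21) - (a02+a21)) = -p \<or> ((a21) - (a02+a21)) = 0 \<or> ((a21) - (a02+a21)) = p \<or> ((a21) - (a02+a21)) = 2*p)) \<or>
     (\<not> ((a20+a01) = -2*p \<or> (a20+a01) = -p \<or> (a20+a01) = 0 \<or> (a20+a01) = p \<or> (a20+a01) = 2*p) \<and> \<not> ((a02+a21) = -2*p \<or> (a02+a21) = -p \<or> (a02+a21) = 0 \<or> (a02+a21) = p \<or> (a02+a21) = 2*p) \<and> \<not> (((a20+a01) - (a02+a21)) = -2*p \<or> ((a20+a01) - (a02+a21)) = -p \<or> ((a20+a01) - (a02+a21)) = 0 \<or> ((a20+a01) - (a02+a21)) = p \<or> ((a20+a01) - (a02+a21)) = 2*p)) \<or>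
     (\<not> ((a10) = -2*p \<or> (a10) = -p \<or> (a10) = 0 \<or> (a10) = p \<or> (a10) = 2*p) \<and> \<not> ((a20) = -2*p \<or> (a20) = -p \<or> (a20) = 0 \<or> (a20) = p \<or> (a20) = 2*p) \<and> \<not> (((a10) - (a20)) = -2*p \<or> ((a10) - (a20)) = -p \<or> ((a10) - (a20)) = 0 \<or> ((a10) - (a20)) = p \<or> ((a10) - (a20)) = 2*p)) \<or>
     (\<not> ((a10) = -2*p \<or> (a10) = -p \<or> (a10) = 0 \<or> (a10) = p \<or> (a10) = 2*p) \<and> \<not> ((a21+a10) = -2*p \<or> (a21+a10) = -p \<or> (a21+a10) = 0 \<or> (a21+a10) = p \<or> (a21+a10) = 2*p) \<and> \<not> (((a10) - (a21+a10)) = -2*p \<or> ((a10) - (a21+a10)) = -p \<or> ((a10) - (a21+a10)) = 0 \<or> ((a10) - (a21+a10)) = p \<or> ((a10) - (a21+a10)) = 2*p)) \<or>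
     (\<not> ((a10) = -2*p \<or> (a10) = -p \<or> (a10) = 0 \<or> (a10) = p \<or> (a10) = 2*p) \<and> \<not> ((a12+a20) = -2*p \<or> (a12+a20) = -p \<or> (a12+a20) = 0 \<or> (a12+a20) = p \<or> (a12+a20) = 2*p) \<and> \<not> (((a10) - (a12+a20)) = -2*p \<or> ((a10) - (a12+a20)) = -p \<or> ((a10) - (a12+a20)) = 0 \<or> ((a10) - (a12+a20)) = p \<or> ((a10) - (a12+a20)) = 2*p)) \<or>
     (\<not> ((a20) = -2*p \<or> (a20) = -p \<or> (a20) = 0 \<or> (a20) = p \<or> (a20) = 2*p) \<and> \<not> ((a21+a10) = -2*p \<or> (a21+a10) = -p \<or> (a21+a10) = 0 \<or> (a21+a10) = p \<or> (a21+a10) = 2*p) \<and> \<not> (((a20) - (a21+a10)) = -2*p \<or> ((a20) - (a21+a10)) = -p \<or> ((a20) - (a21+a10)) = 0 \<or> ((a20) - (a21+a10)) = p \<or> ((a20) - (a21+a10)) = 2*p)) \<or>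
     (\<not> ((a20) = -2*p \<or> (a20) = -p \<or> (a20) = 0 \<or> (a20) = p \<or> (a20) = 2*p) \<and> \<not> ((a12+a20) = -2*p \<or> (a12+a20) = -p \<or> (a12+a20) = 0 \<or> (a12+a20) = p \<or> (a12+a20) = 2*p) \<and> \<not> (((a20) - (a12+a20)) = -2*p \<or> ((a20) - (a12+a20)) = -p \<or> ((a20) - (a12+a20)) = 0 \<or> ((a20) - (a12+a20)) = p \<or> ((a20) - (a12+a20)) = 2*p)) \<or>
     (\<not> ((a21+a10) = -2*p \<or> (a21+a10) = -p \<or> (a21+a10) = 0 \<or> (a21+a10) = p \<or> (a21+a10) = 2*p) \<and> \<not> ((a12+a20) = -2*p \<or> (a12+a20) = -p \<or> (a12+a20) = 0 \<or> (a12+a20) = p \<or> (a12+a20) = 2*p) \<and> \<not> (((a21+a10) - (a12+a20)) = -2*p \<or> ((a21+a10) - (a12+a20)) = -p \<or> ((a21+a10) - (a12+a20)) = 0 \<or> ((a21+a10) - (a12+a20)) = p \<or> ((a21+a10) - (a12+a20)) = 2*p))"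
  using p b h by smt

lemma key_b:
  fixes p a01 a02 a10 a12 a20 a21 :: int
  assumes p: "p \<ge> 3" "odd p"
    and b: "0 \<le> a01" "a01 < p" "0 \<le> a02" "a02 < p" "0 \<le> a10" "a10 < p"
       "0 \<le> a12" "a12 < p" "0 \<le> a20" "a20 < p" "0 \<le> a21" "a21 < p"
    and h: "\<not> Zp p (a01+a10)" "\<not> Zp p (a02+a20)" "\<not> Zp p (a12+a21)" "\<not> Zp p (a01+a12+a20)" "\<not> Zp p (a02+a21+a10)"
  shows "(\<not> Zp p (a02) \<and> \<not> Zp p (a12) \<and> \<not> Zp p ((a02) - (a12))) \<or>
     (\<not> Zp p (a02) \<and> \<not> Zp p (a10+a02) \<and> \<not> Zp p ((a02) - (a10+a02))) \<or>
     (\<not> Zp p (a02) \<and> \<not> Zp p (a01+a12) \<and> \<not> Zp p ((a02) - (a01+a12))) \<or>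
     (\<not> Zp p (a12) \<and> \<not> Zp p (a10+a02) \<and> \<not> Zp p ((a12) - (a10+a02))) \<or>
     (\<not> Zp p (a12) \<and> \<not> Zp p (a01+a12) \<and> \<not> Zp p ((a12) - (a01+a12))) \<or>
     (\<not> Zp p (a10+a02) \<and> \<not> Zp p (a01+a12) \<and> \<not> Zp p ((a10+a02) - (a01+a12))) \<or>
     (\<not> Zp p (a01) \<and> \<not> Zp p (a21) \<and> \<not> Zp p ((a01) - (a21))) \<or>
     (\<not> Zp p (a01) \<and> \<not> Zp p (a20+a01) \<and> \<not> Zp p ((a01) - (a20+a01))) \<or>
     (\<not> Zp p (a01) \<and> \<not> Zp p (a02+a21) \<and> \<not> Zp p ((a01) - (a02+a21))) \<or>
     (\<not> Zp p (a21) \<and> \<not> Zp p (a20+a01) \<and> \<not> Zp p ((a21) - (a20+a01))) \<or>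
     (\<not> Zp p (a21) \<and> \<not> Zp p (a02+a21) \<and> \<not> Zp p ((a21) - (a02+a21))) \<or>
     (\<not> Zp p (a20+a01) \<and> \<not> Zp p (a02+a21) \<and> \<not> Zp p ((a20+a01) - (a02+a21))) \<or>
     (\<not> Zp p (a10) \<and> \<not> Zp p (a20) \<and> \<not> Zp p ((a10) - (a20))) \<or>
     (\<not> Zp p (a10) \<and> \<not> Zp p (a21+a10) \<and> \<not> Zp p ((a10) - (a21+a10))) \<or>
     (\<not> Zp p (a10) \<and> \<not> Zp p (a12+a20) \<and> \<not> Zp p ((a10) - (a12+a20))) \<or>
     (\<not> Zp p (a20) \<and> \<not> Zp p (a21+a10) \<and> \<not> Zp p ((a20) - (a21+a10))) \<or>
     (\<not> Zp p (a20) \<and> \<not> Zp p (a12+a20) \<and> \<not> Zp p ((a20) - (a12+a20))) \<or>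
     (\<not> Zp p (a21+a10) \<and> \<not> Zp p (a12+a20) \<and> \<not> Zp p ((a21+a10) - (a12+a20)))"
proof -
  obtain m where m: "p = 2*m+1" using p(2) by (metis oddE)
  have P: "p > 0" using p by simp
  note M = modz[OF P, folded Zp_def]
  have E0: "Zp p (a01+a10) \<longleftrightarrow> ((a01+a10) = -2*p \<or> (a01+a10) = -p \<or> (a01+a10) = 0 \<or> (a01+a10) = p \<or> (a01+a10) = 2*p)" using b by (intro M) linarith+
  have E1: "Zp p (a02+a20) \<longleftrightarrow> ((a02+a20) = -2*p \<or> (a02+a20) = -p \<or> (a02+a20) = 0 \<or> (a02+a20) = p \<or> (a02+a20) = 2*p)" using b by (intro M) linarith+
  have E2: "Zp p (a12+a21) \<longleftrightarrow> ((a12+a21) = -2*p \<or> (a12+a21) = -p \<or> (a12+a21) = 0 \<or> (a12+a21) = p \<or> (a12+a21) = 2*p)" using b by (intro M) linarith+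
  have E3: "Zp p (a01+a12+a20) \<longleftrightarrow> ((a01+a12+a20) = -2*p \<or> (a01+a12+a20) = -p \<or> (a01+a12+a20) = 0 \<or> (a01+a12+a20) = p \<or> (a01+a12+a20) = 2*p)" using b by (intro M) linarith+
  have E4: "Zp p (a02+a21+a10) \<longleftrightarrow> ((a02+a21+a10) = -2*p \<or> (a02+a21+a10) = -p \<or> (a02+a21+a10) = 0 \<or> (a02+a21+a10) = p \<or> (a02+a21+a10) = 2*p)" using b by (intro M) linarith+
  have E5: "Zp p (a02) \<longleftrightarrow> ((a02) = -2*p \<or> (a02) = -p \<or> (a02) = 0 \<or> (a02) = p \<or> (a02) = 2*p)" using b by (intro M) linarith+
  have E6: "Zp p (a12) \<longleftrightarrow> ((a12) = -2*p \<or> (a12) = -p \<or> (a12) = 0 \<or> (a12) = p \<or> (a12) = 2*p)" using b by (intro M) linarith+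
  have E7: "Zp p (a10+a02) \<longleftrightarrow> ((a10+a02) = -2*p \<or> (a10+a02) = -p \<or> (a10+a02) = 0 \<or> (a10+a02) = p \<or> (a10+a02) = 2*p)" using b by (intro M) linarith+
  have E8: "Zp p (a01+a12) \<longleftrightarrow> ((a01+a12) = -2*p \<or> (a01+a12) = -p \<or> (a01+a12) = 0 \<or> (a01+a12) = p \<or> (a01+a12) = 2*p)" using b by (intro M) linarith+
  have E9: "Zp p ((a02) - (a12)) \<longleftrightarrow> (((a02) - (a12)) = -2*p \<or> ((a02) - (a12)) = -p \<or> ((a02) - (a12)) = 0 \<or> ((a02) - (a12)) = p \<or> ((a02) - (a12)) = 2*p)" using b by (intro M) linarith+
  have E10: "Zp p ((a02) - (a10+a02)) \<longleftrightarrow> (((a02) - (a10+a02)) = -2*p \<or> ((a02) - (a10+a02)) = -p \<or> ((a02) - (a10+a02)) = 0 \<or> ((a02) - (a10+a02)) = p \<or> ((a02) - (a10+a02)) = 2*p)" using b by (intro M) linarith+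
  have E11: "Zp p ((a02) - (a01+a12)) \<longleftrightarrow> (((a02) - (a01+a12)) = -2*p \<or> ((a02) - (a01+a12)) = -p \<or> ((a02) - (a01+a12)) = 0 \<or> ((a02) - (a01+a12)) = p \<or> ((a02) - (a01+a12)) = 2*p)" using b by (intro M) linarith+
  have E12: "Zp p ((a12) - (a10+a02)) \<longleftrightarrow> (((a12) - (a10+a02)) = -2*p \<or> ((a12) - (a10+a02)) = -p \<or> ((a12) - (a10+a02)) = 0 \<or> ((a12) - (a10+a02)) = p \<or> ((a12) - (a10+a02)) = 2*p)" using b by (intro M) linarith+
  have E13: "Zp p ((a12) - (a01+a12)) \<longleftrightarrow> (((a12) - (a01+a12)) = -2*p \<or> ((a12) - (a01+a12)) = -p \<or> ((a12) - (a01+a12)) = 0 \<or> ((a12) - (a01+a12)) = p \<or> ((a12) - (a01+a12)) = 2*p)" using b by (intro M) linarith+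
  have E14: "Zp p ((a10+a02) - (a01+a12)) \<longleftrightarrow> (((a10+a02) - (a01+a12)) = -2*p \<or> ((a10+a02) - (a01+a12)) = -p \<or> ((a10+a02) - (a01+a12)) = 0 \<or> ((a10+a02) - (a01+a12)) = p \<or> ((a10+a02) - (a01+a12)) = 2*p)" using b by (intro M) linarith+
  have E15: "Zp p (a01) \<longleftrightarrow> ((a01) = -2*p \<or> (a01) = -p \<or> (a01) = 0 \<or> (a01) = p \<or> (a01) = 2*p)" using b by (intro M) linarith+
  have E16: "Zp p (a21) \<longleftrightarrow> ((a21) = -2*p \<or> (a21) = -p \<or> (a21) = 0 \<or> (a21) = p \<or> (a21) = 2*p)" using b by (intro M) linarith+
  have E17: "Zp p (a20+a01) \<longleftrightarrow> ((a20+a01) = -2*p \<or> (a20+a01) = -p \<or> (a20+a01) = 0 \<or> (a20+a01) = p \<or> (a20+a01) = 2*p)" using b by (intro M) linarith+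
  have E18: "Zp p (a02+a21) \<longleftrightarrow> ((a02+a21) = -2*p \<or> (a02+a21) = -p \<or> (a02+a21) = 0 \<or> (a02+a21) = p \<or> (a02+a21) = 2*p)" using b by (intro M) linarith+
  have E19: "Zp p ((a01) - (a21)) \<longleftrightarrow> (((a01) - (a21)) = -2*p \<or> ((a01) - (a21)) = -p \<or> ((a01) - (a21)) = 0 \<or> ((a01) - (a21)) = p \<or> ((a01) - (a21)) = 2*p)" using b by (intro M) linarith+
  have E20: "Zp p ((a01) - (a20+a01)) \<longleftrightarrow> (((a01) - (a20+a01)) = -2*p \<or> ((a01) - (a20+a01)) = -p \<or> ((a01) - (a20+a01)) = 0 \<or> ((a01) - (a20+a01)) = p \<or> ((a01) - (a20+a01)) = 2*p)" using b by (intro M) linarith+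
  have E21: "Zp p ((a01) - (a02+a21)) \<longleftrightarrow> (((a01) - (a02+a21)) = -2*p \<or> ((a01) - (a02+a21)) = -p \<or> ((a01) - (a02+a21)) = 0 \<or> ((a01) - (a02+a21)) = p \<or> ((a01) - (a02+a21)) = 2*p)" using b by (intro M) linarith+
  have E22: "Zp p ((a21) - (a20+a01)) \<longleftrightarrow> (((a21) - (a20+a01)) = -2*p \<or> ((a21) - (a20+a01)) = -p \<or> ((a21) - (a20+a01)) = 0 \<or> ((a21) - (a20+a01)) = p \<or> ((a21) - (a20+a01)) = 2*p)" using b by (intro M) linarith+
  have E23: "Zp p ((a21) - (a02+a21)) \<longleftrightarrow> (((a21) - (a02+a21)) = -2*p \<or> ((a21) - (a02+a21)) = -p \<or> ((a21) - (a02+a21)) = 0 \<or> ((a21) - (a02+a21)) = p \<or> ((a21) - (a02+a21)) = 2*p)" using b by (intro M) linarith+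
  have E24: "Zp p ((a20+a01) - (a02+a21)) \<longleftrightarrow> (((a20+a01) - (a02+a21)) = -2*p \<or> ((a20+a01) - (a02+a21)) = -p \<or> ((a20+a01) - (a02+a21)) = 0 \<or> ((a20+a01) - (a02+a21)) = p \<or> ((a20+a01) - (a02+a21)) = 2*p)" using b by (intro M) linarith+
  have E25: "Zp p (a10) \<longleftrightarrow> ((a10) = -2*p \<or> (a10) = -p \<or> (a10) = 0 \<or> (a10) = p \<or> (a10) = 2*p)" using b by (intro M) linarith+
  have E26: "Zp p (a20) \<longleftrightarrow> ((a20) = -2*p \<or> (a20) = -p \<or> (a20) = 0 \<or> (a20) = p \<or> (a20) = 2*p)" using b by (intro M) linarith+
  have E27: "Zp p (a21+a10) \<longleftrightarrow> ((a21+a10) = -2*p \<or> (a21+a10) = -p \<or> (a21+a10) = 0 \<or> (a21+a10) = p \<or> (a21+a10) = 2*p)" using b by (intro M) linarith+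
  have E28: "Zp p (a12+a20) \<longleftrightarrow> ((a12+a20) = -2*p \<or> (a12+a20) = -p \<or> (a12+a20) = 0 \<or> (a12+a20) = p \<or> (a12+a20) = 2*p)" using b by (intro M) linarith+
  have E29: "Zp p ((a10) - (a20)) \<longleftrightarrow> (((a10) - (a20)) = -2*p \<or> ((a10) - (a20)) = -p \<or> ((a10) - (a20)) = 0 \<or> ((a10) - (a20)) = p \<or> ((a10) - (a20)) = 2*p)" using b by (intro M) linarith+
  have E30: "Zp p ((a10) - (a21+a10)) \<longleftrightarrow> (((a10) - (a21+a10)) = -2*p \<or> ((a10) - (a21+a10)) = -p \<or> ((a10) - (a21+a10)) = 0 \<or> ((a10) - (a21+a10)) = p \<or> ((a10) - (a21+a10)) = 2*p)" using b by (intro M) linarith+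
  have E31: "Zp p ((a10) - (a12+a20)) \<longleftrightarrow> (((a10) - (a12+a20)) = -2*p \<or> ((a10) - (a12+a20)) = -p \<or> ((a10) - (a12+a20)) = 0 \<or> ((a10) - (a12+a20)) = p \<or> ((a10) - (a12+a20)) = 2*p)" using b by (intro M) linarith+
  have E32: "Zp p ((a20) - (a21+a10)) \<longleftrightarrow> (((a20) - (a21+a10)) = -2*p \<or> ((a20) - (a21+a10)) = -p \<or> ((a20) - (a21+a10)) = 0 \<or> ((a20) - (a21+a10)) = p \<or> ((a20) - (a21+a10)) = 2*p)" using b by (intro M) linarith+
  have E33: "Zp p ((a20) - (a12+a20)) \<longleftrightarrow> (((a20) - (a12+a20)) = -2*p \<or> ((a20) - (a12+a20)) = -p \<or> ((a20) - (a12+a20)) = 0 \<or> ((a20) - (a12+a20)) = p \<or> ((a20) - (a12+a20)) = 2*p)" using b by (intro M) linarith+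
  have E34: "Zp p ((a21+a10) - (a12+a20)) \<longleftrightarrow> (((a21+a10) - (a12+a20)) = -2*p \<or> ((a21+a10) - (a12+a20)) = -p \<or> ((a21+a10) - (a12+a20)) = 0 \<or> ((a21+a10) - (a12+a20)) = p \<or> ((a21+a10) - (a12+a20)) = 2*p)" using b by (intro M) linarith+
  note E = E0 E1 E2 E3 E4 E5 E6 E7 E8 E9 E10 E11 E12 E13 E14 E15 E16 E17 E18 E19 E20 E21 E22 E23 E24 E25 E26 E27 E28 E29 E30 E31 E32 E33 E34
  have H0: "\<not> ((a01+a10) = -2*p \<or> (a01+a10) = -p \<or> (a01+a10) = 0 \<or> (a01+a10) = p \<or> (a01+a10) = 2*p)" using h(1) E0 by blast
  have H1: "\<not> ((a02+a20) = -2*p \<or> (a02+a20) = -p \<or> (a02+a20) = 0 \<or> (a02+a20) = p \<or> (a02+a20) = 2*p)" using h(2) E1 by blast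
  have H2: "\<not> ((a12+a21) = -2*p \<or> (a12+a21) = -p \<or> (a12+a21) = 0 \<or> (a12+a21) = p \<or> (a12+a21) = 2*p)" using h(3) E2 by blast
  have H3: "\<not> ((a01+a12+a20) = -2*p \<or> (a01+a12+a20) = -p \<or> (a01+a12+a20) = 0 \<or> (a01+a12+a20) = p \<or> (a01+a12+a20) = 2*p)" using h(4) E3 by blast
  have H4: "\<not> ((a02+a21+a10) = -2*p \<or> (a02+a21+a10) = -p \<or> (a02+a21+a10) = 0 \<or> (a02+a21+a10) = p \<or> (a02+a21+a10) = 2*p)" using h(5) E4 by blast
  show ?thesis using key_lin[OF p(1) m b H0 H1 H2 H3 H4] E by smt
qed


lemma zp1: "[x = y] (mod P) \<Longrightarrow> Zp P x \<longleftrightarrow> [y = (0::int)] (mod P)"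
  unfolding Zp_def cong_def by simp

lemma zp2: "[x = y] (mod P) \<Longrightarrow> [x' = y'] (mod P) \<Longrightarrow> Zp P (x - x') \<longleftrightarrow> [y = (y'::int)] (mod P)"
  unfolding Zp_def by (metis cong_diff cong_def cong_iff_dvd_diff dvd_eq_mod_eq_0 cong_sym cong_trans)

theorem lemma6:
  fixes p :: nat and w :: "nat \<times> nat \<Rightarrow> int"
  assumes "prime p" and "p \<ge> 3"
    and "zero_sum_free p K3_vertices w"
  shows "\<exists>v \<in> K3_vertices. \<exists>P1 P2.
           dpath K3_vertices P1 \<and> dpath K3_vertices P2 \<and> last P1 = v \<and> last P2 = v \<and>
           \<not> [(\<Sum>a \<in> path_arcs P1. w a) = 0] (mod int p) \<and>
           \<not> [(\<Sum>a \<in> path_arcs P2. w a) = 0] (mod int p) \<and>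
           \<not> [(\<Sum>a \<in> path_arcs P1. w a) = (\<Sum>a \<in> path_arcs P2. w a)] (mod int p)"
proof -
  define P where "P = int p"
  have zs: "\<And>xs. dcycle K3_vertices xs \<Longrightarrow> \<not> [sum_list (map w (cycle_arcs xs)) = 0] (mod P)" using assms(3) unfolding zero_sum_free_def P_def by blast
  have P3: "P \<ge> 3" using assms(2) unfolding P_def by simp
  have Podd: "odd P" using assms unfolding P_def using prime_odd_nat[of p] by simp
  define b where "b = (\<lambda>a. w a mod P)"
  have cb: "\<And>a. [b a = w a] (mod P)" unfolding b_def cong_def by simp
  have bnd: "0 \<le> b (0,1)" "b (0,1) < P" "0 \<le> b (0,2)" "b (0,2) < P" "0 \<le> b (1,0)" "b (1,0) < P" "0 \<le> b (1,2)" "b (1,2) < P" "0 \<le> b (2,0)" "b (2,0) < P" "0 \<le> b (2,1)" "b (2,1) < P" using P3 unfolding b_def by simp_all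
  have Cy0: "\<not> [w (0, 1)+w (1, 0) = 0] (mod P)" using zs[of "[0,1]"] by (simp add: dcycle_def cycle_arcs_def K3_vertices_def P_def add.assoc)
  have Cy1: "\<not> [w (0, 2)+w (2, 0) = 0] (mod P)" using zs[of "[0,2]"] by (simp add: dcycle_def cycle_arcs_def K3_vertices_def P_def add.assoc)
  have Cy2: "\<not> [w (1, 2)+w (2, 1) = 0] (mod P)" using zs[of "[1,2]"] by (simp add: dcycle_def cycle_arcs_def K3_vertices_def P_def add.assoc)
  have Cy3: "\<not> [w (0, 1)+w (1, 2)+w (2, 0) = 0] (mod P)" using zs[of "[0,1,2]"] by (simp add: dcycle_def cycle_arcs_def K3_vertices_def P_def add.assoc)
  have Cy4: "\<not> [w (0, 2)+w (2, 1)+w (1, 0) = 0] (mod P)" using zs[of "[0,2,1]"] by (simp add: dcycle_def cycle_arcs_def K3_vertices_def P_def add.assoc)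
  have S0: "(\<Sum>a\<in>path_arcs [0,2]. w a) = w (0, 2)" by (simp add: path_arcs_def)
  have S1: "(\<Sum>a\<in>path_arcs [1,2]. w a) = w (1, 2)" by (simp add: path_arcs_def)
  have S2: "(\<Sum>a\<in>path_arcs [1,0,2]. w a) = w (1, 0)+w (0, 2)" by (simp add: path_arcs_def)
  have S3: "(\<Sum>a\<in>path_arcs [0,1,2]. w a) = w (0, 1)+w (1, 2)" by (simp add: path_arcs_def)
  have S4: "(\<Sum>a\<in>path_arcs [0,1]. w a) = w (0, 1)" by (simp add: path_arcs_def)
  have S5: "(\<Sum>a\<in>path_arcs [2,1]. w a) = w (2, 1)" by (simp add: path_arcs_def)
  have S6: "(\<Sum>a\<in>path_arcs [2,0,1]. w a) = w (2, 0)+w (0, 1)" by (simp add: path_arcs_def)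
  have S7: "(\<Sum>a\<in>path_arcs [0,2,1]. w a) = w (0, 2)+w (2, 1)" by (simp add: path_arcs_def)
  have S8: "(\<Sum>a\<in>path_arcs [1,0]. w a) = w (1, 0)" by (simp add: path_arcs_def)
  have S9: "(\<Sum>a\<in>path_arcs [2,0]. w a) = w (2, 0)" by (simp add: path_arcs_def)
  have S10: "(\<Sum>a\<in>path_arcs [2,1,0]. w a) = w (2, 1)+w (1, 0)" by (simp add: path_arcs_def)
  have S11: "(\<Sum>a\<in>path_arcs [1,2,0]. w a) = w (1, 2)+w (2, 0)" by (simp add: path_arcs_def)
  note S = S0 S1 S2 S3 S4 S5 S6 S7 S8 S9 S10 S11
  have R: "Zp P (b (0, 1)+b (1, 0)) \<longleftrightarrow> [w (0, 1)+w (1, 0) = 0] (mod P)" "Zp P (b (0, 2)+b (2, 0)) \<longleftrightarrow> [w (0, 2)+w (2, 0) = 0] (mod P)" "Zp P (b (1, 2)+b (2, 1)) \<longleftrightarrow> [w (1, 2)+w (2, 1) = 0] (mod P)" "Zp P (b (0, 1)+b (1, 2)+b (2, 0)) \<longleftrightarrow> [w (0, 1)+w (1, 2)+w (2, 0) = 0] (mod P)" "Zp P (b (0, 2)+b (2, 1)+b (1, 0)) \<longleftrightarrow> [w (0, 2)+w (2, 1)+w (1, 0) = 0] (mod P)" "Zp P (b (0, 2)) \<longleftrightarrow> [w (0, 2) = 0] (mod P)" "Zp P (b (1, 2)) \<longleftrightarrow> [w (1, 2) = 0] (mod P)" "Zp P (b (1, 0)+b (0, 2)) \<longleftrightarrow>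 [w (1, 0)+w (0, 2) = 0] (mod P)" "Zp P (b (0, 1)+b (1, 2)) \<longleftrightarrow> [w (0, 1)+w (1, 2) = 0] (mod P)" "Zp P (b (0, 1)) \<longleftrightarrow> [w (0, 1) = 0] (mod P)" "Zp P (b (2, 1)) \<longleftrightarrow> [w (2, 1) = 0] (mod P)" "Zp P (b (2, 0)+b (0, 1)) \<longleftrightarrow> [w (2, 0)+w (0, 1) = 0] (mod P)" "Zp P (b (0, 2)+b (2, 1)) \<longleftrightarrow> [w (0, 2)+w (2, 1) = 0] (mod P)" "Zp P (b (1, 0)) \<longleftrightarrow> [w (1, 0) = 0] (mod P)" "Zp P (b (2, 0)) \<longleftrightarrow> [w (2, 0) = 0] (mod P)" "Zp P (b (2, 1)+b (1, 0)) \<longleftrightarrow> [w (2, 1)+w (1, 0) = 0] (mod P)" "Zp P (b (1, 2)+b (2, 0)) \<longleftrightarrow> [w (1, 2)+w (2, 0) = 0] (mod P)" "Zp P ((b (0, 2)) - (b (1, 2))) \<longleftrightarrow> [w (0, 2) = w (1, 2)] (mod P)" "Zp P ((b (0, 2)) - (b (1, 0)+b (0, 2))) \<longleftrightarrow> [w (0, 2) = w (1, 0)+w (0, 2)] (mod P)" "Zp P ((b (0, 2)) - (b (0, 1)+b (1, 2))) \<longleftrightarrow> [w (0, 2) = w (0, 1)+w (1, 2)] (mod P)" "Zp P ((b (1, 2)) - (b (1, 0)+b (0, 2))) \<longleftrightarrow> [w (1, 2) = w (1, 0)+w (0, 2)] (mod P)" "Zp P ((b (1, 2)) - (b (0, 1)+b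 (1, 2))) \<longleftrightarrow> [w (1, 2) = w (0, 1)+w (1, 2)] (mod P)" "Zp P ((b (1, 0)+b (0, 2)) - (b (0, 1)+b (1, 2))) \<longleftrightarrow> [w (1, 0)+w (0, 2) = w (0, 1)+w (1, 2)] (mod P)" "Zp P ((b (0, 1)) - (b (2, 1))) \<longleftrightarrow> [w (0, 1) = w (2, 1)] (mod P)" "Zp P ((b (0, 1)) - (b (2, 0)+b (0, 1))) \<longleftrightarrow> [w (0, 1) = w (2, 0)+w (0, 1)] (mod P)" "Zp P ((b (0, 1)) - (b (0, 2)+b (2, 1))) \<longleftrightarrow> [w (0, 1) = w (0, 2)+w (2, 1)] (mod P)" "Zp P ((b (2, 1)) - (b (2, 0)+b (0, 1))) \<longleftrightarrow> [w (2, 1) = w (2, 0)+w (0, 1)] (mod P)" "Zp P ((b (2, 1)) - (b (0, 2)+b (2, 1))) \<longleftrightarrow> [w (2, 1) = w (0, 2)+w (2, 1)] (mod P)" "Zp P ((b (2, 0)+b (0, 1)) - (b (0, 2)+b (2, 1))) \<longleftrightarrow> [w (2, 0)+w (0, 1) = w (0, 2)+w (2, 1)] (mod P)" "Zp P ((b (1, 0)) - (b (2, 0))) \<longleftrightarrow> [w (1, 0) = w (2, 0)] (mod P)" "Zp P ((b (1, 0)) - (b (2, 1)+b (1, 0))) \<longleftrightarrow> [w (1, 0) = w (2, 1)+w (1, 0)] (mod P)" "Zp P ((b (1, 0)) - (b (1, 2)+b (2, 0))) \<longleftrightarrow> [w (1, 0) = w (1, 2)+w (2, 0)] (mod P)"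 "Zp P ((b (2, 0)) - (b (2, 1)+b (1, 0))) \<longleftrightarrow> [w (2, 0) = w (2, 1)+w (1, 0)] (mod P)" "Zp P ((b (2, 0)) - (b (1, 2)+b (2, 0))) \<longleftrightarrow> [w (2, 0) = w (1, 2)+w (2, 0)] (mod P)" "Zp P ((b (2, 1)+b (1, 0)) - (b (1, 2)+b (2, 0))) \<longleftrightarrow> [w (2, 1)+w (1, 0) = w (1, 2)+w (2, 0)] (mod P)"
    by (intro zp2 zp1 cong_add cb)+

  note K = key_b[of P "b (0,1)" "b (0,2)" "b (1,0)" "b (1,2)" "b (2,0)" "b (2,1)", OF P3 Podd bnd, unfolded R, OF Cy0 Cy1 Cy2 Cy3 Cy4]
  have fin: "\<And>v P1 P2 X Y. v \<in> K3_vertices \<Longrightarrow> dpath K3_vertices P1 \<Longrightarrow> dpath K3_vertices P2 \<Longrightarrow> last P1 = v \<Longrightarrow> last P2 = v \<Longrightarrow> (\<Sum>a\<in>path_arcs P1. w a) = X \<Longrightarrow> (\<Sum>a\<in>path_arcs P2. w a) = Y \<Longrightarrow> \<not> [X = 0] (mod P) \<Longrightarrow> \<not> [Y = 0] (mod P) \<Longrightarrow> \<not> [X = Y] (mod P) \<Longrightarrow> ?thesis"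
    unfolding P_def by blast
  show ?thesis
    using K
    apply (elim disjE)
    subgoal by (rule fin[of 2 "[0,2]" "[1,2]" "w (0, 2)" "w (1, 2)"]) (simp_all add: path_arcs_def K3_vertices_def dpath_def)
    subgoal by (rule fin[of 2 "[0,2]" "[1,0,2]" "w (0, 2)" "w (1, 0)+w (0, 2)"]) (simp_all add: path_arcs_def K3_vertices_def dpath_def)
    subgoal by (rule fin[of 2 "[0,2]" "[0,1,2]" "w (0, 2)" "w (0, 1)+w (1, 2)"]) (simp_all add: path_arcs_def K3_vertices_def dpath_def)
    subgoal by (rule fin[of 2 "[1,2]" "[1,0,2]" "w (1, 2)" "w (1, 0)+w (0, 2)"]) (simp_all add: path_arcs_def K3_vertices_def dpath_def)
    subgoal by (rule fin[of 2 "[1,2]" "[0,1,2]" "w (1, 2)" "w (0, 1)+w (1, 2)"]) (simp_all add: path_arcs_def K3_vertices_def dpath_def)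
    subgoal by (rule fin[of 2 "[1,0,2]" "[0,1,2]" "w (1, 0)+w (0, 2)" "w (0, 1)+w (1, 2)"]) (simp_all add: path_arcs_def K3_vertices_def dpath_def)
    subgoal by (rule fin[of 1 "[0,1]" "[2,1]" "w (0, 1)" "w (2, 1)"]) (simp_all add: path_arcs_def K3_vertices_def dpath_def)
    subgoal by (rule fin[of 1 "[0,1]" "[2,0,1]" "w (0, 1)" "w (2, 0)+w (0, 1)"]) (simp_all add: path_arcs_def K3_vertices_def dpath_def)
    subgoal by (rule fin[of 1 "[0,1]" "[0,2,1]" "w (0, 1)" "w (0, 2)+w (2, 1)"]) (simp_all add: path_arcs_def K3_vertices_def dpath_def)
    subgoal by (rule fin[of 1 "[2,1]" "[2,0,1]" "w (2, 1)" "w (2, 0)+w (0, 1)"]) (simp_all add: path_arcs_def K3_vertices_def dpath_def)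
    subgoal by (rule fin[of 1 "[2,1]" "[0,2,1]" "w (2, 1)" "w (0, 2)+w (2, 1)"]) (simp_all add: path_arcs_def K3_vertices_def dpath_def)
    subgoal by (rule fin[of 1 "[2,0,1]" "[0,2,1]" "w (2, 0)+w (0, 1)" "w (0, 2)+w (2, 1)"]) (simp_all add: path_arcs_def K3_vertices_def dpath_def)
    subgoal by (rule fin[of 0 "[1,0]" "[2,0]" "w (1, 0)" "w (2, 0)"]) (simp_all add: path_arcs_def K3_vertices_def dpath_def)
    subgoal by (rule fin[of 0 "[1,0]" "[2,1,0]" "w (1, 0)" "w (2, 1)+w (1, 0)"]) (simp_all add: path_arcs_def K3_vertices_def dpath_def)
    subgoal by (rule fin[of 0 "[1,0]" "[1,2,0]" "w (1, 0)" "w (1, 2)+w (2, 0)"]) (simp_all add: path_arcs_def K3_vertices_def dpath_def)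
    subgoal by (rule fin[of 0 "[2,0]" "[2,1,0]" "w (2, 0)" "w (2, 1)+w (1, 0)"]) (simp_all add: path_arcs_def K3_vertices_def dpath_def)
    subgoal by (rule fin[of 0 "[2,0]" "[1,2,0]" "w (2, 0)" "w (1, 2)+w (2, 0)"]) (simp_all add: path_arcs_def K3_vertices_def dpath_def)
    subgoal by (rule fin[of 0 "[2,1,0]" "[1,2,0]" "w (2, 1)+w (1, 0)" "w (1, 2)+w (2, 0)"]) (simp_all add: path_arcs_def K3_vertices_def dpath_def)
    done
qed

end
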